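(* Let $T_1,T_2$ be tables joined on column $J$, where $T_1$ has a real-valued column $W$. Let $0<p_1,q_1,p_2,q_2\le1$, $S_1=\mathrm{UBS}_{p_1,q_1}(T_1,J)$, $S_2=\mathrm{UBS}_{p_2,q_2}(T_2,J)$, $p_{\min}=\min\{p_1,p_2\}$, and let $F=\sum_{(t_1,t_2)\in S_1\bowtie_J S_2} t_1.W$. Then the estimator $\hat J_{\mathrm{sum}}=\frac{1}{p_{\min}q_1q_2}F$ satisfies $\mathrm{E}[\hat J_{\mathrm{sum}}]=E_{\mathrm{sum}}$, where $E_{\mathrm{sum}}=\sum_{(t_1,t_2)\in T_1\bowtie_J T_2} t_1.W$.
   Context: $T_1,T_2$ are finite multisets of tuples with a join attribute $J$ taking values in a finite set $\mathcal U$. $X\bowtie_J Y$ is the set of pairs $(t_1,t_2)\in X\times Y$ with $t_1.J=t_2.J$. $\mathrm{UBS}_{p,q}(T,J)$: given a hash function $h:\mathcal U\to[0,1]$, each tuple $t\in T$ with $h(t.J)<p$ is included independently with probability $q$; others are excluded. The values $h(v)$ are independent uniform on $[0,1]$, the same $h$ is used for both tables, and the Bernoulli coins are independent across all tuples and independent of $h$. *)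

theory Defs
  imports "HOL-Probability.Probability"
begin

text \<open>Tables are finite sets of tuple identifiers (so duplicate tuples are allowed);
  a table carries a join-key function into the finite universe 'u.\<close>

definition UBS :: "real \<Rightarrow> ('t \<Rightarrow> 'u) \<Rightarrow> 't set \<Rightarrow> ('u \<Rightarrow> real) \<Rightarrow> ('t \<Rightarrow> bool) \<Rightarrow> 't set" where
  "UBS p key T h c = {t \<in> T. h (key t) < p \<and> c t}"

definition join :: "('t1 \<Rightarrow> 'u) \<Rightarrow> ('t2 \<Rightarrow> 'u) \<Rightarrow> 't1 set \<Rightarrow> 't2 set \<Rightarrow> ('t1 \<times> 't2) set" where
  "join key1 key2 X Y = {(t1, t2). t1 \<in> X \<and> t2 \<in> Y \<and> key1 t1 = key2 t2}"

definition ubs_space :: "'t1 set \<Rightarrow> 't2 set \<Rightarrow> real \<Rightarrow> real \<Rightarrow>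
    (('u::finite \<Rightarrow> real) \<times> ('t1 \<Rightarrow> bool) \<times> ('t2 \<Rightarrow> bool)) measure" where
  "ubs_space T1 T2 q1 q2 =
     (PiM UNIV (\<lambda>_. uniform_measure lborel {0..1::real})) \<Otimes>\<^sub>M
     ((PiM T1 (\<lambda>_. measure_pmf (bernoulli_pmf q1))) \<Otimes>\<^sub>M
      (PiM T2 (\<lambda>_. measure_pmf (bernoulli_pmf q2))))"

definition J_sum_hat ::
  "('t1 \<Rightarrow> 'u) \<Rightarrow> ('t2 \<Rightarrow> 'u) \<Rightarrow> ('t1 \<Rightarrow> real) \<Rightarrow> 't1 set \<Rightarrow> 't2 set \<Rightarrow>
   real \<Rightarrow> real \<Rightarrow> real \<Rightarrow> real \<Rightarrow>
   ('u \<Rightarrow> real) \<times> ('t1 \<Rightarrow> bool) \<times> ('t2 \<Rightarrow> bool) \<Rightarrow> real" where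
  "J_sum_hat key1 key2 W T1 T2 p1 q1 p2 q2 = (\<lambda>(h, c1, c2).
     (\<Sum>(t1, t2) \<in> join key1 key2 (UBS p1 key1 T1 h c1) (UBS p2 key2 T2 h c2). W t1)
       / (min p1 p2 * q1 * q2))"

end

theory Submission
  imports Defs
begin

abbreviation "UU \<equiv> uniform_measure lborel {0..1::real}"

lemma UU_prob: "prob_space UU"
  by (rule prob_space_uniform_measure) auto

lemma measure_comp_event:
  fixes M :: "'i \<Rightarrow> 'a measure"
  assumes M: "\<And>i. i \<in> I \<Longrightarrow> prob_space (M i)" and i: "i \<in> I" and A: "A \<in> sets (M i)"
  shows "measure (PiM I M) {x \<in> space (PiM I M). x i \<in> A} = measure (M i) A"
proof -
  have "measure (M i) A = measure (distr (PiM I M) (M i) (\<lambda>\<omega>. \<omega> i)) A"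
    using distr_PiM_component[of I M i, OF M i] by simp
  also have "\<dots> = measure (PiM I M) ((\<lambda>\<omega>. \<omega> i) -` A \<inter> space (PiM I M))"
    by (rule measure_distr) (auto intro: measurable_component_singleton i A)
  also have "(\<lambda>\<omega>. \<omega> i) -` A \<inter> space (PiM I M) = {x \<in> space (PiM I M). x i \<in> A}" by auto
  finally show ?thesis by simp
qed

lemma measure_UU:
  assumes "0 \<le> m" "m \<le> 1"
  shows "measure UU {..<m} = m"
proof -
  have "measure UU {..<m} = measure lborel ({0..1} \<inter> {..<m}) / measure lborel {0..1::real}"
    by (subst measure_uniform_measure) auto
  also have "{0..1} \<inter> {..<m} = {0..<m}" using assms by auto
  finally show ?thesis using assms by simp
qed

theorem lemma4:
  fixes key1 :: "'t1 \<Rightarrow> 'u::finite" and key2 :: "'t2 \<Rightarrow> 'u"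
    and W :: "'t1 \<Rightarrow> real" and T1 :: "'t1 set" and T2 :: "'t2 set"
    and p1 q1 p2 q2 :: real
  assumes "finite T1" and "finite T2"
    and "0 < p1" "p1 \<le> 1" "0 < q1" "q1 \<le> 1"
    and "0 < p2" "p2 \<le> 1" "0 < q2" "q2 \<le> 1"
  shows "(\<integral>\<omega>. J_sum_hat key1 key2 W T1 T2 p1 q1 p2 q2 \<omega> \<partial>(ubs_space T1 T2 q1 q2))
         = (\<Sum>(t1, t2) \<in> join key1 key2 T1 T2. W t1)"
proof -
  define m where "m = min p1 p2"
  define d where "d = m * q1 * q2"
  define HM where "HM = (PiM (UNIV::'u set) (\<lambda>_. UU))"
  define B1 where "B1 = PiM T1 (\<lambda>_. measure_pmf (bernoulli_pmf q1))"
  define B2 where "B2 = PiM T2 (\<lambda>_. measure_pmf (bernoulli_pmf q2))"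
  define A where "A = (\<lambda>k. {h \<in> space HM. h k \<in> {..<m}})"
  define C1 where "C1 = (\<lambda>t. {c \<in> space B1. c t \<in> {True}})"
  define C2 where "C2 = (\<lambda>t. {c \<in> space B2. c t \<in> {True}})"
  define E where "E = (\<lambda>x. A (key1 (fst x)) \<times> (C1 (fst x) \<times> C2 (snd x)))"
  have sp: "ubs_space T1 T2 q1 q2 = HM \<Otimes>\<^sub>M (B1 \<Otimes>\<^sub>M B2)"
    unfolding ubs_space_def HM_def B1_def B2_def ..
  have m: "0 < m" "m \<le> 1" using assms unfolding m_def by auto
  have d: "d \<noteq> 0" using m assms unfolding d_def by auto
  have pHM: "prob_space HM" unfolding HM_def by (rule prob_space_PiM) (rule UU_prob)
  have pB1: "prob_space B1" unfolding B1_def by (rule prob_space_PiM) (rule prob_space_measure_pmf)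
  have pB2: "prob_space B2" unfolding B2_def by (rule prob_space_PiM) (rule prob_space_measure_pmf)
  interpret P12: pair_prob_space B1 B2 using pB1 pB2 by (simp add: pair_prob_space_def pair_sigma_finite_def prob_space_imp_sigma_finite)
  interpret P: pair_prob_space HM "B1 \<Otimes>\<^sub>M B2" using pHM P12.prob_space_axioms
    by (simp add: pair_prob_space_def pair_sigma_finite_def prob_space_imp_sigma_finite)
  have Asets: "A k \<in> sets HM" for k
    unfolding A_def HM_def by measurable
  have C1sets: "C1 t \<in> sets B1" if "t \<in> T1" for t
    proof -
    have "(\<lambda>x. x t) -` {True} \<inter> space B1 \<in> sets B1"
      unfolding B1_def by (rule measurable_sets[OF measurable_component_singleton]) (use that in auto)
    moreover have "C1 t = (\<lambda>x. x t) -` {True} \<inter> space B1" unfolding C1_def by auto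
    ultimately show ?thesis by simp
  qed
  have C2sets: "C2 t \<in> sets B2" if "t \<in> T2" for t
    proof -
    have "(\<lambda>x. x t) -` {True} \<inter> space B2 \<in> sets B2"
      unfolding B2_def by (rule measurable_sets[OF measurable_component_singleton]) (use that in auto)
    moreover have "C2 t = (\<lambda>x. x t) -` {True} \<inter> space B2" unfolding C2_def by auto
    ultimately show ?thesis by simp
  qed
  have mA: "measure HM (A k) = m" for k
    unfolding A_def HM_def
    by (subst measure_comp_event) (use m UU_prob measure_UU in auto)
  have mC1: "measure B1 (C1 t) = q1" if "t \<in> T1" for t
    unfolding C1_def B1_def
    by (subst measure_comp_event) (use that assms prob_space_measure_pmf in \<open>auto simp: measure_pmf_single\<close>)
  have mC2: "measure B2 (C2 t) = q2" if "t \<in> T2" for t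
    unfolding C2_def B2_def
    by (subst measure_comp_event) (use that assms prob_space_measure_pmf in \<open>auto simp: measure_pmf_single\<close>)
  have Esets: "E x \<in> sets (ubs_space T1 T2 q1 q2)" if "x \<in> join key1 key2 T1 T2" for x
    using that unfolding sp E_def join_def
    by (auto intro!: pair_measureI Asets C1sets C2sets)
  have mE: "measure (ubs_space T1 T2 q1 q2) (E x) = d" if "x \<in> join key1 key2 T1 T2" for x
  proof -
    have "measure (ubs_space T1 T2 q1 q2) (E x) = measure HM (A (key1 (fst x))) * measure (B1 \<Otimes>\<^sub>M B2) (C1 (fst x) \<times> C2 (snd x))"
      using that unfolding sp E_def join_def
      by (auto simp: measure_def sigma_finite_measure.emeasure_pair_measure_Times[OF prob_space_imp_sigma_finite[OF P12.prob_space_axioms]] Asets C1sets C2sets pair_measureI enn2real_mult)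
    also have "\<dots> = m * (q1 * q2)"
      using that unfolding join_def
      by (auto simp: measure_def sigma_finite_measure.emeasure_pair_measure_Times[OF prob_space_imp_sigma_finite[OF pB2]] C1sets C2sets enn2real_mult mA[unfolded measure_def]
            mC1[unfolded measure_def] mC2[unfolded measure_def])
    finally show ?thesis unfolding d_def by simp
  qed
  have pt: "J_sum_hat key1 key2 W T1 T2 p1 q1 p2 q2 \<omega> =
      (\<Sum>x\<in>join key1 key2 T1 T2. W (fst x) * indicator (E x) \<omega>) / d"
    if "\<omega> \<in> space (ubs_space T1 T2 q1 q2)" for \<omega>
  proof -
    obtain h c1 c2 where w: "\<omega> = (h, c1, c2)" by (cases \<omega>) auto
    have hs: "h \<in> space HM" "c1 \<in> space B1" "c2 \<in> space B2"
      using that unfolding sp w by (auto simp: space_pair_measure)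
    have jj: "join key1 key2 (UBS p1 key1 T1 h c1) (UBS p2 key2 T2 h c2) =
       {x \<in> join key1 key2 T1 T2. \<omega> \<in> E x}"
      using hs unfolding join_def UBS_def E_def A_def C1_def C2_def w m_def by auto
    have fin: "finite (join key1 key2 T1 T2)"
      by (rule finite_subset[of _ "T1 \<times> T2"]) (use assms in \<open>auto simp: join_def\<close>)
    have "(\<Sum>(t1, t2) \<in> join key1 key2 (UBS p1 key1 T1 h c1) (UBS p2 key2 T2 h c2). W t1) =
        (\<Sum>x\<in>{x \<in> join key1 key2 T1 T2. \<omega> \<in> E x}. W (fst x))"
      unfolding jj by (simp add: case_prod_beta)
    also have "\<dots> = (\<Sum>x\<in>join key1 key2 T1 T2. W (fst x) * indicator (E x) \<omega>)"
      using fin by (simp add: sum.inter_filter[symmetric] indicator_def if_distrib Int_def cong: if_cong)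
    finally show ?thesis unfolding J_sum_hat_def w d_def m_def by simp
  qed
  have "(\<integral>\<omega>. J_sum_hat key1 key2 W T1 T2 p1 q1 p2 q2 \<omega> \<partial>(ubs_space T1 T2 q1 q2)) =
        (\<integral>\<omega>. (\<Sum>x\<in>join key1 key2 T1 T2. W (fst x) * indicator (E x) \<omega>) / d \<partial>(ubs_space T1 T2 q1 q2))"
    by (rule Bochner_Integration.integral_cong) (auto simp: pt)
  also have "\<dots> = (\<Sum>x\<in>join key1 key2 T1 T2. W (fst x) * measure (ubs_space T1 T2 q1 q2) (E x)) / d"
  proof -
    have "(\<integral>\<omega>. (\<Sum>x\<in>join key1 key2 T1 T2. W (fst x) * indicator (E x) \<omega>) \<partial>(ubs_space T1 T2 q1 q2))
       = (\<Sum>x\<in>join key1 key2 T1 T2. (\<integral>\<omega>. W (fst x) * indicator (E x) \<omega> \<partial>(ubs_space T1 T2 q1 q2)))"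
      by (rule Bochner_Integration.integral_sum) (use Esets P.prob_space_axioms sp in \<open>auto intro!: integrable_real_mult_indicator finite_measure.emeasure_finite prob_space.finite_measure simp: top.not_eq_extremum[symmetric]\<close>)
    also have "\<dots> = (\<Sum>x\<in>join key1 key2 T1 T2. W (fst x) * measure (ubs_space T1 T2 q1 q2) (E x))"
      using Esets by (auto intro!: sum.cong simp: sets.Int_space_eq2)
    finally show ?thesis by simp
  qed
  also have "\<dots> = (\<Sum>(t1, t2) \<in> join key1 key2 T1 T2. W t1)"
    using d by (simp add: mE sum_divide_distrib[symmetric] sum_distrib_right[symmetric] case_prod_beta)
  finally show ?thesis .
qed

end
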